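(* Let $G$ be split with root system of type $G_2$, simple roots $\alpha_1$ (short) and $\alpha_2$ (long), and let $\widetilde G$ be an $n$-fold Brylinski--Deligne cover associated with a Weyl-invariant quadratic form $Q$. If $n_{\alpha_2}=3n_{\alpha_1}$, then $$f_X(\Phi_+^\vee)=f_Y(\Phi_+)=\frac{1}{3n_{\alpha_1}}\{1,4,5\}\cup\frac{1}{n_{\alpha_1}}\{1,2,3\}.$$ If $n_{\alpha_1}=n_{\alpha_2}$ $(=n_\alpha)$, then $f_X(\Phi^\vee_+)=f_Y(\Phi_+)=\frac{1}{n_\alpha}[1,5]$.
   Context: $[a,b]$ denotes $\{a,\dots,b\}$. Notation: $\omega_\alpha$ fundamental weights, $\omega^\vee_\alpha$ fundamental coweights, $\rho^\vee=\sum_{\alpha\in\Delta}\omega_\alpha^\vee$. $B_Q(y,z)=Q(y+z)-Q(y)-Q(z)$, $Y_{Q,n}=\{y\in Y:B_Q(y,z)\in n\mathbf Z\ \forall z\in Y\}$, $n_\alpha=n/\gcd(n,Q(\alpha^\vee))$, and $\tilde n_\alpha$ ($\alpha\in\Phi$) defined by $\mathbf Z\alpha^\vee\cap Y_{Q,n}=\mathbf Z\tilde n_\alpha\alpha^\vee$ (for type $G_2$ one has $\tilde n_\alpha=n_\alpha$). $f_X:\Phi_+^\vee\to\mathbf Q$, $f_X(\beta^\vee)=\sum_{\alpha\in\Delta}\langle\omega_\alpha/\tilde n_\alpha,\beta^\vee\rangle$; $f_Y:\Phi_+\to\mathbf Q$, $f_Y(\beta)=\langle\rho^\vee,\beta\rangle/\tilde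 n_\beta$. *)

theory Defs
  imports Main "HOL.Rat"
begin

text \<open>Root datum of the split group of type G2 (simply connected = adjoint, so the
cocharacter lattice Y is the coroot lattice).  Elements of Y are written in the basis
of simple coroots (alpha1^vee, alpha2^vee); roots are written in the basis of simple
roots (alpha1 short, alpha2 long).\<close>

type_synonym cochar = "int \<times> int"
type_synonym root = "int \<times> int"

definition G2_pos_roots :: "root set" where
  "G2_pos_roots = {(1,0), (0,1), (1,1), (2,1), (3,1), (3,2)}"

definition G2_simple_roots :: "root set" where
  "G2_simple_roots = {(1,0), (0,1)}"

text \<open>Pairing of a root with a cocharacter: Cartan integers
 <alpha1,alpha1^v>=2, <alpha1,alpha2^v>=-1, <alpha2,alpha1^v>=-3, <alpha2,alpha2^v>=2.\<close>
fun pair :: "root \<Rightarrow> cochar \<Rightarrow> int" where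
  "pair (a,b) (y1,y2) = a * (2*y1 - y2) + b * (-3*y1 + 2*y2)"

text \<open>W-invariant form on roots with (alpha1,alpha1)=2, (alpha1,alpha2)=-3,
(alpha2,alpha2)=6; coroot beta^v = 2 beta/(beta,beta) in the coroot basis.\<close>
fun rnorm :: "root \<Rightarrow> int" where
  "rnorm (a,b) = 2*a*a - 6*a*b + 6*b*b"

fun coroot :: "root \<Rightarrow> cochar" where
  "coroot (a,b) = ((2*a) div rnorm (a,b), (6*b) div rnorm (a,b))"

definition G2_pos_coroots :: "cochar set" where
  "G2_pos_coroots = coroot ` G2_pos_roots"

fun refl :: "root \<Rightarrow> cochar \<Rightarrow> cochar" where
  "refl \<alpha> y = (fst y - pair \<alpha> y * fst (coroot \<alpha>), snd y - pair \<alpha> y * snd (coroot \<alpha>))"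

definition is_quadratic_form :: "(cochar \<Rightarrow> int) \<Rightarrow> bool" where
  "is_quadratic_form Q \<longleftrightarrow> (\<exists>a b c. \<forall>y1 y2. Q (y1,y2) = a*y1^2 + b*y1*y2 + c*y2^2)"

definition weyl_invariant :: "(cochar \<Rightarrow> int) \<Rightarrow> bool" where
  "weyl_invariant Q \<longleftrightarrow> (\<forall>\<alpha>\<in>G2_simple_roots. \<forall>y. Q (refl \<alpha> y) = Q y)"

definition BQ :: "(cochar \<Rightarrow> int) \<Rightarrow> cochar \<Rightarrow> cochar \<Rightarrow> int" where
  "BQ Q y z = Q (fst y + fst z, snd y + snd z) - Q y - Q z"

definition YQn :: "(cochar \<Rightarrow> int) \<Rightarrow> int \<Rightarrow> cochar set" where
  "YQn Q n = {y. \<forall>z. n dvd BQ Q y z}"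

definition n_root :: "(cochar \<Rightarrow> int) \<Rightarrow> int \<Rightarrow> root \<Rightarrow> int" where
  "n_root Q n \<alpha> = n div gcd n (Q (coroot \<alpha>))"

definition ntilde :: "(cochar \<Rightarrow> int) \<Rightarrow> int \<Rightarrow> root \<Rightarrow> int" where
  "ntilde Q n \<alpha> = int (LEAST k::nat. k > 0 \<and>
      (int k * fst (coroot \<alpha>), int k * snd (coroot \<alpha>)) \<in> YQn Q n)"

text \<open>f_X(beta^v) = sum over simple alpha of <omega_alpha/ntilde_alpha, beta^v>;
<omega_alpha1, y> = y1, <omega_alpha2, y> = y2.\<close>
definition fX :: "(cochar \<Rightarrow> int) \<Rightarrow> int \<Rightarrow> cochar \<Rightarrow> rat" where
  "fX Q n c = of_int (fst c) / of_int (ntilde Q n (1,0)) + of_int (snd c) / of_int (ntilde Q n (0,1))"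

text \<open>f_Y(beta) = <rho^v, beta>/ntilde_beta with <rho^v, a alpha1 + b alpha2> = a + b.\<close>
definition fY :: "(cochar \<Rightarrow> int) \<Rightarrow> int \<Rightarrow> root \<Rightarrow> rat" where
  "fY Q n \<beta> = of_int (fst \<beta> + snd \<beta>) / of_int (ntilde Q n \<beta>)"

end

theory Submission
  imports Defs
begin

lemma Qform:
  assumes "is_quadratic_form Q" and "weyl_invariant Q"
  shows "\<exists>c. \<forall>y1 y2. Q (y1,y2) = c*(3*y1^2 - 3*y1*y2 + y2^2)"
proof -
  obtain a b c where Q: "\<And>y1 y2. Q (y1,y2) = a*y1^2 + b*y1*y2 + c*y2^2"
    using assms(1) unfolding is_quadratic_form_def by blast
  have "Q (refl (1,0) (0,1)) = Q (0,1)" using assms(2) unfolding weyl_invariant_def G2_simple_roots_def by blast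
  hence e1: "a + b = 0" by (simp add: Q)
  have "Q (refl (0,1) (1,0)) = Q (1,0)" using assms(2) unfolding weyl_invariant_def G2_simple_roots_def by blast
  hence e2: "b = -3*c" by (simp add: Q)
  have e3: "a = 3*c" using e1 e2 by simp
  show ?thesis by (rule exI[of _ c]) (simp add: Q e2 e3 algebra_simps)
qed

lemma dvd_iff: fixes n m k :: int assumes "n > 0" shows "n dvd k*m \<longleftrightarrow> (n div gcd n m) dvd k"
  by (smt (verit) assms div_dvd_iff_mult division_decomp dvd_mult_div_cancel
    dvd_triv_right gcd_dvd1 gcd_greatest_iff mult_dvd_mono mult_eq_0_iff)

lemma least_eq:
  fixes N :: int assumes "N > 0" and "\<And>k::nat. P k \<longleftrightarrow> N dvd int k"
  shows "int (LEAST k::nat. k > 0 \<and> P k) = N"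
proof -
  have "(LEAST k::nat. k > 0 \<and> P k) = nat N"
  proof (rule Least_equality)
    show "0 < nat N \<and> P (nat N)" using assms by simp
    fix y :: nat assume "0 < y \<and> P y"
    hence "N dvd int y" "int y > 0" using assms by auto
    hence "N \<le> int y" using zdvd_imp_le by blast
    thus "nat N \<le> y" by simp
  qed
  thus ?thesis using assms by simp
qed

theorem lemma3p6:
  fixes Q :: "int \<times> int \<Rightarrow> int" and n :: int
  assumes "n > 0" and "is_quadratic_form Q" and "weyl_invariant Q"
  shows "(n_root Q n (0,1) = 3 * n_root Q n (1,0) \<longrightarrow>
           fX Q n ` G2_pos_coroots = fY Q n ` G2_pos_roots \<and>
           fY Q n ` G2_pos_roots =
             (\<lambda>k. of_int k / of_int (3 * n_root Q n (1,0))) ` {1,4,5}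
             \<union> (\<lambda>k. of_int k / of_int (n_root Q n (1,0))) ` {1,2,3})
       \<and> (n_root Q n (1,0) = n_root Q n (0,1) \<longrightarrow>
           fX Q n ` G2_pos_coroots = fY Q n ` G2_pos_roots \<and>
           fY Q n ` G2_pos_roots =
             (\<lambda>k. of_int k / of_int (n_root Q n (1,0))) ` {1..5})"
proof -
  obtain c where Q: "\<And>y1 y2. Q (y1,y2) = c*(3*y1^2 - 3*y1*y2 + y2^2)"
    using Qform[OF assms(2,3)] by blast
  have B: "BQ Q y z = c*(6*fst y*fst z - 3*fst y*snd z - 3*snd y*fst z + 2*snd y*snd z)" for y z
    unfolding BQ_def by (cases y; cases z) (simp add: Q algebra_simps power2_eq_square)
  have Y: "(y1,y2) \<in> YQn Q n \<longleftrightarrow> n dvd c*(6*y1-3*y2) \<and> n dvd c*(2*y2-3*y1)" for y1 y2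
  proof
    assume "(y1,y2) \<in> YQn Q n"
    hence "n dvd BQ Q (y1,y2) (1,0)" "n dvd BQ Q (y1,y2) (0,1)" unfolding YQn_def by auto
    thus "n dvd c*(6*y1-3*y2) \<and> n dvd c*(2*y2-3*y1)" by (simp add: B algebra_simps)
  next
    assume h: "n dvd c*(6*y1-3*y2) \<and> n dvd c*(2*y2-3*y1)"
    show "(y1,y2) \<in> YQn Q n" unfolding YQn_def
    proof (intro CollectI allI)
      fix z :: "int \<times> int"
      have "BQ Q (y1,y2) z = fst z * (c*(6*y1-3*y2)) + snd z * (c*(2*y2-3*y1))"
        by (simp add: B algebra_simps)
      thus "n dvd BQ Q (y1,y2) z" using h by simp
    qed
  qed
  define N1 where "N1 = n div gcd n (3*c)"
  define N2 where "N2 = n div gcd n c"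
  have N1p: "N1 > 0" unfolding N1_def using assms(1)
    by (simp add: pos_imp_zdiv_pos_iff zdvd_imp_le)
  have N2p: "N2 > 0" unfolding N2_def using assms(1)
    by (simp add: pos_imp_zdiv_pos_iff zdvd_imp_le)
  have S: "n dvd int k * (3*c) \<longleftrightarrow> N1 dvd int k" for k
    unfolding N1_def using dvd_iff[OF assms(1)] by blast
  have L: "n dvd int k * c \<longleftrightarrow> N2 dvd int k" for k
    unfolding N2_def using dvd_iff[OF assms(1)] by blast
  have L': "n dvd x*3 \<and> n dvd x*2 \<longleftrightarrow> n dvd x" for x
  proof
    assume "n dvd x*3 \<and> n dvd x*2"
    hence "n dvd x*3 - x*2" by (meson dvd_diff)
    thus "n dvd x" by simp
  qed auto
  have nr1: "n_root Q n (1,0) = N1" unfolding n_root_def N1_def by (simp add: Q mult.commute)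
  have nr2: "n_root Q n (0,1) = N2" unfolding n_root_def N2_def by (simp add: Q)
  have d2: "n dvd x \<Longrightarrow> n dvd x*2" for x by simp
  have t10: "ntilde Q n (1,0) = N1" unfolding ntilde_def
  proof (rule least_eq[OF N1p])
    fix k :: nat
    have e6: "c * (int k * 6) = (c * (int k * 3))*2" by simp
    have "n dvd c * (int k * 3) \<Longrightarrow> n dvd c * (int k * 6)" unfolding e6 by (rule d2)
    thus "(int k * fst (coroot (1, 0)), int k * snd (coroot (1, 0))) \<in> YQn Q n \<longleftrightarrow> N1 dvd int k"
      by (auto simp add: Y S[symmetric] algebra_simps)
  qed
  have t11: "ntilde Q n (1,1) = N1" unfolding ntilde_def
    by (rule least_eq[OF N1p]) (simp add: Y S[symmetric] algebra_simps)
  have t21: "ntilde Q n (2,1) = N1" unfolding ntilde_def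
    by (rule least_eq[OF N1p]) (simp add: Y S[symmetric] algebra_simps)
  have t01: "ntilde Q n (0,1) = N2" unfolding ntilde_def
  proof (rule least_eq[OF N2p])
    fix k :: nat
    have "n dvd c*(int k*3) \<and> n dvd c*(int k*2) \<longleftrightarrow> n dvd int k * c"
      using L'[of "c*int k"] by (simp add: ac_simps)
    thus "(int k * fst (coroot (0, 1)), int k * snd (coroot (0, 1))) \<in> YQn Q n \<longleftrightarrow> N2 dvd int k"
      by (simp add: Y L[symmetric] algebra_simps)
  qed
  have d3: "n dvd c*int k \<Longrightarrow> n dvd c*(int k*a)" for k a by (metis dvd_mult2 mult.assoc)
  have t31: "ntilde Q n (3,1) = N2" unfolding ntilde_def
    by (rule least_eq[OF N2p]) (auto simp add: Y L[symmetric] algebra_simps d3)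
  have t32: "ntilde Q n (3,2) = N2" unfolding ntilde_def
    by (rule least_eq[OF N2p]) (auto simp add: Y L[symmetric] algebra_simps d3)
  have C: "G2_pos_coroots = {(1,0),(0,1),(1,3),(2,3),(1,1),(1,2)}"
    unfolding G2_pos_coroots_def G2_pos_roots_def by simp
  have FX: "fX Q n ` G2_pos_coroots = {1/of_int N1, 1/of_int N2, 1/of_int N1 + 3/of_int N2,
      2/of_int N1 + 3/of_int N2, 1/of_int N1 + 1/of_int N2, 1/of_int N1 + 2/of_int N2}"
    unfolding C fX_def t10 t01 by simp
  have FY: "fY Q n ` G2_pos_roots = {1/of_int N1, 1/of_int N2, 2/of_int N1, 3/of_int N1,
      4/of_int N2, 5/of_int N2}"
    unfolding G2_pos_roots_def fY_def by (simp add: t10 t11 t21 t01 t31 t32)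
  show ?thesis
  proof (intro conjI impI)
    assume "n_root Q n (0,1) = 3 * n_root Q n (1,0)"
    hence e: "N2 = 3*N1" using nr1 nr2 by simp
    define x :: rat where "x = 1 / of_int (3*N1)"
    have k: "of_int k / of_int (3*N1) = of_int k * x" "of_int k / of_int N1 = 3 * of_int k * x"
       "of_int k / of_int N2 = of_int k * x" for k :: int
      using N1p unfolding x_def e by (simp_all add: field_simps)
    have FX': "fX Q n ` G2_pos_coroots = {3*x, x, 6*x, 9*x, 4*x, 5*x}"
    proof -
      have a: "1/of_int N1 = 3*x" "1/of_int N2 = x" "3/of_int N2 = 3*x"
        "2/of_int N1 = 6*x" "2/of_int N2 = 2*x"
        using N1p unfolding x_def e by (simp_all add: field_simps)
      have b: "3*x+3*x = 6*x" "6*x+3*x = 9*x" "3*x+x = 4*x" "3*x+2*x=5*x" by algebra+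
      show ?thesis unfolding FX a b by auto
    qed
    have FY': "fY Q n ` G2_pos_roots = {3*x, x, 6*x, 9*x, 4*x, 5*x}"
    proof -
      have a: "1/of_int N1 = 3*x" "1/of_int N2 = x" "3/of_int N1 = 9*x"
        "2/of_int N1 = 6*x" "4/of_int N2 = 4*x" "5/of_int N2 = 5*x"
        using N1p unfolding x_def e by (simp_all add: field_simps)
      show ?thesis unfolding FY a by auto
    qed
    have R: "(\<lambda>k. of_int k / of_int (3 * n_root Q n (1,0))) ` {1,4,5}
             \<union> (\<lambda>k. of_int k / of_int (n_root Q n (1,0))) ` {1,2,3} =
          (\<lambda>k. of_int k * x) ` {1,4,5} \<union> (\<lambda>k. 3 * of_int k * x) ` {1,2,3}"
      unfolding nr1 by (simp only: k)
    show "fX Q n ` G2_pos_coroots = fY Q n ` G2_pos_roots" unfolding FX' FY' ..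
    show "fY Q n ` G2_pos_roots =
             (\<lambda>k. of_int k / of_int (3 * n_root Q n (1,0))) ` {1,4,5}
             \<union> (\<lambda>k. of_int k / of_int (n_root Q n (1,0))) ` {1,2,3}"
      unfolding R FY' by auto
  next
    assume "n_root Q n (1,0) = n_root Q n (0,1)"
    hence e: "N2 = N1" using nr1 nr2 by simp
    define x :: rat where "x = 1 / of_int N1"
    have k: "of_int k / of_int N1 = of_int k * x" for k :: int
      unfolding x_def by simp
    have a: "1/of_int N1 = x" "2/of_int N1 = 2*x" "3/of_int N1 = 3*x"
        "4/of_int N1 = 4*x" "5/of_int N1 = 5*x"
        using N1p unfolding x_def by (simp_all add: field_simps)
    have b: "x+3*x = 4*x" "2*x+3*x = 5*x" "x+x = 2*x" "x+2*x=3*x" by algebra+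
    have FX': "fX Q n ` G2_pos_coroots = {x, 2*x, 3*x, 4*x, 5*x}"
      unfolding FX e a b by auto
    have FY': "fY Q n ` G2_pos_roots = {x, 2*x, 3*x, 4*x, 5*x}"
      unfolding FY e a by auto
    have I: "{1..5::int} = {1,2,3,4,5}" by auto
    have R: "(\<lambda>k. of_int k / of_int (n_root Q n (1,0))) ` {1..5} = (\<lambda>k. of_int k * x) ` {1,2,3,4,5}"
      unfolding nr1 I by (simp only: k)
    show "fX Q n ` G2_pos_coroots = fY Q n ` G2_pos_roots" unfolding FX' FY' ..
    show "fY Q n ` G2_pos_roots = (\<lambda>k. of_int k / of_int (n_root Q n (1,0))) ` {1..5}"
      unfolding R FY' by auto
  qed
qed

end
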